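(* Let $A$ be a finite alphabet, $w_1,\ldots,w_k\in A^*$, and $N=\max(|w_1|,\ldots,|w_k|)\ge1$. The following are equivalent: (1) $\mathrm{WMIX}(w_1,\ldots,w_k)$ is infinite. (2) There exists a trace $T\subseteq\mathcal P(\mathcal D_N)\cup\mathcal C(\mathcal D_N)$ of some walk in $\mathcal D_N$, written $T=\{\pi\}\cup\{\gamma_1,\ldots,\gamma_m\}$ with $\pi$ its unique path and $\gamma_1,\ldots,\gamma_m$ its pairwise distinct cycles, satisfying both (balance condition) there exist integers $x_1,\ldots,x_m\ge1$ such that \[\mathrm{diff}\Big(\mathrm{occ}(\mathrm{src}(\pi);w_1,\ldots,w_k)+\mathrm{occ}(\pi;w_1,\ldots,w_k)+\sum_{i=1}^m x_i\cdot\mathrm{occ}(\gamma_i;w_1,\ldots,w_k)\Big)=0,\] where $\mathrm{src}(\pi)\in A^N$ is regarded as a word; and (pumping condition) there exist $y_1,\ldots,y_m\in\mathbb N$, not all zero, such that \[\mathrm{diff}\Big(\sum_{i=1}^m y_i\cdot\mathrm{occ}(\gamma_i;w_1,\ldots,w_k)\Big)=0.\]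
   Context: For $u,w\in A^*$, $|w|_u$ is the number of pairs $(x,y)\in A^*\times A^*$ with $xuy=w$. $\mathrm{WMIX}(w_1,\ldots,w_k)=\{w\in A^*\mid|w|_{w_1}=\cdots=|w|_{w_k}\}$. For $\bm v=(c_1,\ldots,c_k)\in\mathbb N^k$, $\mathrm{diff}(\bm v)=\sum_{i=1}^k(\max(c_1,\ldots,c_k)-c_i)$ (so $\mathrm{diff}(\bm v)=0$ iff all coordinates are equal). $\mathrm{suff}(w)$ is the set of suffixes of $w$. A (directed) graph is $\mathcal G=(V,E)$ with $E\subseteq V\times V$. A walk is a sequence $\omega=(v_1,\ldots,v_n)\in V^n$, $n\ge1$, with $(v_i,v_{i+1})\in E$ for all $1\le i<n$; its length is $|\omega|=n-1$, its source $\mathrm{src}(\omega)$ is $v_1$ and its target is $v_n$. $V(\omega)=\{v_1,\ldots,v_n\}$. If the target of $\omega_1=(v_1,\ldots,v_m)$ equals the source of $\omega_2=(v'_1,\ldots,v'_n)$, then $\omega_1\odot\omega_2=(v_1,\ldots,v_m,v'_2,\ldots,v'_n)$. A loop is a non-empty walk whose source equals its target. A path is a walk whose vertices are pairwise distinct (empty walks are paths). A cycle is a loop $(v,v_1,\ldots,v_n,v)$ such that $(v,v_1,\ldots,v_n)$ is a path. $\mathcal W(\mathcal G),\mathcal P(\mathcal G),\mathcal C(\mathcal G)$ denote the sets of walks, paths and cycles. For a sequence of cycles $\Gamma=(\gamma_1,\ldots,\gamma_n)$: $|\Gamma|_\gamma=\#\{i\mid\gamma_i=\gamma\}$, $\Gamma.\gamma=(\gamma_1,\ldots,\gamma_n,\gamma)$;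 $\emptyset$ is the empty sequence. Decomposition $\mathrm{dec}_{\mathcal G}:\mathcal W(\mathcal G)\to\mathcal P(\mathcal G)\times\mathcal C(\mathcal G)^*$, by induction on length: $\mathrm{dec}_{\mathcal G}((v))=((v),\emptyset)$; for a walk $\omega$ with target $v$ and an edge $(v,v')$, let $(\pi,\Gamma)=\mathrm{dec}_{\mathcal G}(\omega)$ (the target of $\pi$ is $v$); if $v'\notin V(\pi)$ then $\mathrm{dec}_{\mathcal G}(\omega\odot(v,v'))=(\pi\odot(v,v'),\Gamma)$; otherwise, writing $\pi=(v_1,\ldots,v_{j-1},v',v_{j+1},\ldots,v)$, $\mathrm{dec}_{\mathcal G}(\omega\odot(v,v'))=((v_1,\ldots,v_{j-1},v'),\ \Gamma.(v',v_{j+1},\ldots,v,v'))$. Multi-trace: for $\omega\in\mathcal W(\mathcal G)$ with $(\pi_\omega,\Gamma)=\mathrm{dec}_{\mathcal G}(\omega)$, $\mathrm{mtr}(\omega):\mathcal P(\mathcal G)\cup\mathcal C(\mathcal G)\to\mathbb N$ is given by $\mathrm{mtr}(\omega)(\pi)=1$ if $\pi=\pi_\omega$ and $0$ for other paths $\pi$, and $\mathrm{mtr}(\omega)(\gamma)=|\Gamma|_\gamma$ for cycles $\gamma$. The trace of $\omega$ is $\mathrm{tr}(\omega)=\{x\in\mathcal P(\mathcal G)\cup\mathcal C(\mathcal G)\mid\mathrm{mtr}(\omega)(x)\neq0\}$; it contains exactly one path. The $N$-dimensional de Bruijn graph $\mathcal D_N=(A^N,E)$ has vertex set $A^N$ and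 edge set $E=\{(av,vb)\mid a,b\in A,\ v\in A^{N-1}\}$. $\mathrm{suf}(w;w_1,\ldots,w_k)=(c_1,\ldots,c_k)\in\mathbb N^k$ with $c_i=1$ if $w_i\in\mathrm{suff}(w)$ and $0$ otherwise; $\mathrm{occ}(w;w_1,\ldots,w_k)=(|w|_{w_1},\ldots,|w|_{w_k})$ for a word $w$; for a walk $\omega=(v_0,v_1,\ldots,v_n)$ in $\mathcal D_N$, $\mathrm{occ}(\omega;w_1,\ldots,w_k)=\sum_{i=1}^n\mathrm{suf}(v_i;w_1,\ldots,w_k)$ (zero vector if $n=0$). *)

theory Defs
  imports Main "HOL-Library.Sublist"
begin

text \<open>Words over the alphabet 'a are lists; the alphabet A is the (finite) type 'a.
  The words w_1..w_k are the list ws, indexed 0..k-1. Vectors in N^k are functions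
  nat => nat of which only the indices i < k matter.\<close>

definition nocc :: "'a list \<Rightarrow> 'a list \<Rightarrow> nat" where
  "nocc u w = card {(x, y). x @ u @ y = w}"

definition WMIX :: "'a list list \<Rightarrow> 'a list set" where
  "WMIX ws = {w. \<forall>i < length ws. \<forall>j < length ws. nocc (ws ! i) w = nocc (ws ! j) w}"

definition vdiff :: "nat \<Rightarrow> (nat \<Rightarrow> nat) \<Rightarrow> nat" where
  "vdiff k v = (\<Sum>i<k. Max (v ` {..<k}) - v i)"

definition db_edge :: "nat \<Rightarrow> 'a list \<Rightarrow> 'a list \<Rightarrow> bool" where
  "db_edge N u v = (\<exists>a b x. length x = N - 1 \<and> u = a # x \<and> v = x @ [b])"

definition is_walk :: "nat \<Rightarrow> 'a list list \<Rightarrow> bool" where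
  "is_walk N \<omega> = (\<omega> \<noteq> [] \<and> (\<forall>v \<in> set \<omega>. length v = N) \<and>
     (\<forall>i. Suc i < length \<omega> \<longrightarrow> db_edge N (\<omega> ! i) (\<omega> ! Suc i)))"

definition is_path :: "nat \<Rightarrow> 'a list list \<Rightarrow> bool" where
  "is_path N \<omega> = (is_walk N \<omega> \<and> distinct \<omega>)"

definition is_cycle :: "nat \<Rightarrow> 'a list list \<Rightarrow> bool" where
  "is_cycle N \<omega> = (is_walk N \<omega> \<and> length \<omega> \<ge> 2 \<and> hd \<omega> = last \<omega> \<and> distinct (butlast \<omega>))"

text \<open>Decomposition of a walk into a path and a sequence of cycles\<close>
definition dec_step :: "'v \<Rightarrow> 'v list \<times> 'v list list \<Rightarrow> 'v list \<times> 'v list list" where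
  "dec_step v' p = (let (\<pi>, \<Gamma>) = p in
     if v' \<notin> set \<pi> then (\<pi> @ [v'], \<Gamma>)
     else (takeWhile (\<lambda>x. x \<noteq> v') \<pi> @ [v'], \<Gamma> @ [dropWhile (\<lambda>x. x \<noteq> v') \<pi> @ [v']]))"

definition dec :: "'v list \<Rightarrow> 'v list \<times> 'v list list" where
  "dec \<omega> = fold dec_step (tl \<omega>) ([hd \<omega>], [])"

definition mtr :: "'v list \<Rightarrow> 'v list \<Rightarrow> nat" where
  "mtr \<omega> x = (if x = fst (dec \<omega>) then 1 else count_list (snd (dec \<omega>)) x)"

definition tr :: "'v list \<Rightarrow> 'v list set" where
  "tr \<omega> = {x. mtr \<omega> x \<noteq> 0}"

definition suf_vec :: "'a list list \<Rightarrow> 'a list \<Rightarrow> nat \<Rightarrow> nat" where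
  "suf_vec ws w i = (if i < length ws \<and> suffix (ws ! i) w then 1 else 0)"

definition occ_word :: "'a list list \<Rightarrow> 'a list \<Rightarrow> nat \<Rightarrow> nat" where
  "occ_word ws w i = (if i < length ws then nocc (ws ! i) w else 0)"

definition occ_walk :: "'a list list \<Rightarrow> 'a list list \<Rightarrow> nat \<Rightarrow> nat" where
  "occ_walk ws \<omega> i = (\<Sum>v \<leftarrow> tl \<omega>. suf_vec ws v i)"

end

theory Submission
  imports Defs Complex_Main
begin


lemma succ_nth: "successively P xs \<longleftrightarrow> (\<forall>i. Suc i < length xs \<longrightarrow> P (xs!i) (xs!Suc i))"
proof (induction xs)
  case Nil then show ?case by simp
next
  case (Cons x xs)
  show ?case
  proof (cases xs)
    case Nil then show ?thesis by simp
  next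
    case (Cons y ys)
    have "(\<forall>i. Suc i < length (x#xs) \<longrightarrow> P ((x#xs)!i) ((x#xs)!Suc i)) \<longleftrightarrow>
          P x y \<and> (\<forall>i. Suc i < length xs \<longrightarrow> P (xs!i) (xs!Suc i))"
      apply (simp add: Cons)
      apply (rule iffI)
       apply (intro conjI allI impI)
        apply (drule spec[of _ 0], simp)
       apply (drule_tac x="Suc i" in spec, simp)
      apply (intro allI impI)
      apply (case_tac i, auto)
      done
    then show ?thesis using Cons.IH by (simp add: Cons)
  qed
qed

lemma is_walk_succ: "is_walk N \<omega> \<longleftrightarrow> \<omega> \<noteq> [] \<and> (\<forall>v\<in>set \<omega>. length v = N) \<and> successively (db_edge N) \<omega>"
  unfolding is_walk_def succ_nth by blast

lemma walk_snoc: "\<omega> \<noteq> [] \<Longrightarrow> is_walk N (\<omega>@[v]) \<longleftrightarrow> is_walk N \<omega> \<and> length v = N \<and> db_edge N (last \<omega>) v"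
  unfolding is_walk_succ by (auto simp: successively_append_iff)

lemma walk_append: "\<omega>1 \<noteq> [] \<Longrightarrow> \<omega>2 \<noteq> [] \<Longrightarrow> is_walk N (\<omega>1@\<omega>2) \<longleftrightarrow> is_walk N \<omega>1 \<and> is_walk N \<omega>2 \<and> db_edge N (last \<omega>1) (hd \<omega>2)"
  unfolding is_walk_succ by (auto simp: successively_append_iff)

definition word :: "'a list list \<Rightarrow> 'a list" where
  "word \<omega> = hd \<omega> @ map last (tl \<omega>)"

lemma word_snoc: "\<omega> \<noteq> [] \<Longrightarrow> word (\<omega>@[v]) = word \<omega> @ [last v]"
  by (cases \<omega>) (auto simp: word_def)

lemma db_edgeE: "db_edge N u v \<Longrightarrow> (\<And>a b x. length x = N - 1 \<Longrightarrow> u = a#x \<Longrightarrow> v = x@[b] \<Longrightarrow> P) \<Longrightarrow> P"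
  unfolding db_edge_def by blast

lemma word_last_suffix: "is_walk N \<omega> \<Longrightarrow> suffix (last \<omega>) (word \<omega>)"
proof (induction \<omega> rule: rev_induct)
  case Nil then show ?case by (simp add: is_walk_def)
next
  case (snoc v \<omega>)
  show ?case
  proof (cases "\<omega> = []")
    case True then show ?thesis by (simp add: word_def)
  next
    case False
    with snoc.prems have w: "is_walk N \<omega>" and e: "db_edge N (last \<omega>) v" by (auto simp: walk_snoc)
    from e obtain a b x where "last \<omega> = a#x" "v = x@[b]" by (auto elim: db_edgeE)
    moreover have "suffix (last \<omega>) (word \<omega>)" using snoc.IH w by blast
    ultimately show ?thesis using False by (auto simp: word_snoc suffix_def)
  qed
qed

lemma length_word: "is_walk N \<omega> \<Longrightarrow> length (word \<omega>) = N + (length \<omega> - 1)"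
  by (cases \<omega>) (auto simp: word_def is_walk_def)

lemma nocc_finite: "finite {(x, y). x @ u @ y = w}"
proof -
  have "{(x, y). x @ u @ y = w} \<subseteq> (\<lambda>i. (take i w, drop (i + length u) w)) ` {..length w}"
  proof
    fix p assume "p \<in> {(x, y). x @ u @ y = w}"
    then obtain x y where p: "p = (x,y)" "x @ u @ y = w" by auto
    then show "p \<in> (\<lambda>i. (take i w, drop (i + length u) w)) ` {..length w}"
      by (intro image_eqI[of _ _ "length x"]) auto
  qed
  then show ?thesis by (rule finite_subset) simp
qed

lemma nocc_snoc: "nocc u (w@[b]) = nocc u w + (if suffix u (w@[b]) then 1 else 0)"
proof -
  let ?A = "{(x, y). x @ u @ y = w @ [b] \<and> y = []}"
  let ?B = "(\<lambda>(x,y). (x, y@[b])) ` {(x, y). x @ u @ y = w}"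
  have eq0: "(x @ u @ y = w @ [b]) \<longleftrightarrow> (x, y) \<in> ?A \<union> ?B" for x y
  proof (cases y rule: rev_cases)
    case Nil
    have "(x, []) \<notin> ?B" by auto
    then show ?thesis using Nil by simp
  next
    case (snoc y' c)
    have "(x, y) \<in> ?B \<longleftrightarrow> x @ u @ y' = w \<and> c = b"
    proof
      assume "(x, y) \<in> ?B" then show "x @ u @ y' = w \<and> c = b" using snoc by auto
    next
      assume "x @ u @ y' = w \<and> c = b" then show "(x, y) \<in> ?B" using snoc
        by (intro image_eqI[of _ _ "(x,y')"]) auto
    qed
    then show ?thesis using snoc by auto
  qed
  have eq: "{(x, y). x @ u @ y = w @ [b]} = ?A \<union> ?B"
    using eq0 by auto
  have disj: "?A \<inter> ?B = {}" by auto
  have cB: "card ?B = nocc u w"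
    unfolding nocc_def by (rule card_image) (auto simp: inj_on_def)
  have cA: "card ?A = (if suffix u (w@[b]) then 1 else 0)"
  proof (cases "suffix u (w@[b])")
    case True
    then obtain z where z: "w@[b] = z@u" by (auto simp: suffix_def)
    have "?A = {(z,[])}" using z by auto
    then show ?thesis using True by simp
  next
    case False
    then have A0: "?A = {}" by (auto simp: suffix_def) (metis)
    show ?thesis by (simp only: A0 card.empty if_not_P[OF False])
  qed
  have fA: "finite ?A" by (rule finite_subset[OF _ nocc_finite[of u "w@[b]"]]) auto
  have fB: "finite ?B" using nocc_finite by blast
  show ?thesis unfolding nocc_def[of u "w@[b]"] eq
    using card_Un_disjoint[OF fA fB disj] cA cB by simp
qed

lemma nocc_word: "is_walk N \<omega> \<Longrightarrow> length u \<le> N \<Longrightarrow>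
  nocc u (word \<omega>) = nocc u (hd \<omega>) + sum_list (map (\<lambda>v. if suffix u v then 1 else 0) (tl \<omega>))"
proof (induction \<omega> rule: rev_induct)
  case Nil then show ?case by (simp add: is_walk_def)
next
  case (snoc v \<omega>)
  show ?case
  proof (cases "\<omega> = []")
    case True then show ?thesis by (simp add: word_def)
  next
    case False
    with snoc.prems have w: "is_walk N \<omega>" and e: "db_edge N (last \<omega>) v" and lv: "length v = N"
      by (auto simp: walk_snoc)
    from e obtain a b x where "last \<omega> = a#x" "v = x@[b]" by (auto elim: db_edgeE)
    moreover have "suffix (last \<omega>) (word \<omega>)" using word_last_suffix w by blast
    ultimately have sv: "suffix v (word \<omega> @ [last v])" by (auto simp: suffix_def)
    have "suffix u (word \<omega> @ [last v]) \<longleftrightarrow> suffix u v"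
      using sv lv snoc.prems(2) suffix_length_suffix suffix_order.order_trans by metis
    then show ?thesis using snoc.IH[OF w snoc.prems(2)] False
      by (simp add: word_snoc nocc_snoc)
  qed
qed

lemma word_surj: assumes "length w \<ge> N" "N \<ge> 1" shows "\<exists>\<omega>. is_walk N \<omega> \<and> word \<omega> = w"
  using assms(1)
proof (induction w rule: rev_induct)
  case Nil then show ?case using assms(2) by simp
next
  case (snoc b w)
  show ?case
  proof (cases "length w < N")
    case True
    then have "length (w@[b]) = N" using snoc.prems by simp
    then show ?thesis by (intro exI[of _ "[w@[b]]"]) (auto simp: is_walk_def word_def)
  next
    case False
    then obtain \<omega> where w: "is_walk N \<omega>" "word \<omega> = w" using snoc.IH by force
    have ne: "\<omega> \<noteq> []" using w by (simp add: is_walk_def)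
    have ll: "length (last \<omega>) = N" using w ne by (simp add: is_walk_def)
    then obtain a x where ax: "last \<omega> = a#x" using assms(2) by (cases "last \<omega>") auto
    have "is_walk N (\<omega>@[x@[b]])" using w ne ll ax
      by (subst walk_snoc) (auto simp: db_edge_def)
    moreover have "word (\<omega>@[x@[b]]) = w@[b]" using ne w by (simp add: word_snoc)
    ultimately show ?thesis by blast
  qed
qed



definition wt :: "('v \<Rightarrow> nat) \<Rightarrow> 'v list \<Rightarrow> nat" where
  "wt f xs = sum_list (map f (tl xs))"

definition conn :: "'v list \<Rightarrow> 'v list set \<Rightarrow> bool" where
  "conn \<pi> C = (\<forall>D\<subseteq>C. D \<noteq> C \<longrightarrow> (\<exists>\<gamma>\<in>C-D. set \<gamma> \<inter> (set \<pi> \<union> \<Union>(set ` D)) \<noteq> {}))"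

lemma connD: assumes "conn \<pi> C" "D \<subseteq> C" "D \<noteq> C"
  shows "\<exists>\<gamma>\<in>C-D. set \<gamma> \<inter> (set \<pi> \<union> \<Union>(set ` D)) \<noteq> {}"
proof -
  have "\<forall>D\<subseteq>C. D \<noteq> C \<longrightarrow> (\<exists>\<gamma>\<in>C-D. set \<gamma> \<inter> (set \<pi> \<union> \<Union>(set ` D)) \<noteq> {})"
    using assms(1) unfolding conn_def .
  then show ?thesis using assms(2,3) by simp
qed

lemma conn_mono: assumes "conn \<pi> C" "set \<pi> \<subseteq> set \<pi>'" shows "conn \<pi>' C"
  unfolding conn_def
proof (intro allI impI)
  fix D assume DC: "D \<subseteq> C" "D \<noteq> C"
  from connD[OF assms(1) DC] obtain \<gamma> where "\<gamma> \<in> C - D" "set \<gamma> \<inter> (set \<pi> \<union> \<Union>(set ` D)) \<noteq> {}" ..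
  moreover have "set \<pi> \<union> \<Union>(set ` D) \<subseteq> set \<pi>' \<union> \<Union>(set ` D)" using assms(2) by blast
  ultimately show "\<exists>\<gamma>\<in>C - D. set \<gamma> \<inter> (set \<pi>' \<union> \<Union>(set ` D)) \<noteq> {}" by blast
qed

lemma walk_prefix: "is_walk N (xs@ys) \<Longrightarrow> xs \<noteq> [] \<Longrightarrow> is_walk N xs"
  unfolding is_walk_succ successively_append_iff by auto

lemma walk_suffix: "is_walk N (xs@ys) \<Longrightarrow> ys \<noteq> [] \<Longrightarrow> is_walk N ys"
  unfolding is_walk_succ successively_append_iff by auto

lemma wt_snoc: "xs \<noteq> [] \<Longrightarrow> wt f (xs@[v]) = wt f xs + f v"
  by (cases xs) (auto simp: wt_def)

lemma wt_split: "wt f (ys@[v']) + wt f (v'#zs@[v']) = wt f (ys@v'#zs) + f v'"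
  by (cases ys) (auto simp: wt_def)

lemma dec_snoc: "\<omega> \<noteq> [] \<Longrightarrow> dec (\<omega>@[v]) = dec_step v (dec \<omega>)"
  by (cases \<omega>) (auto simp: dec_def)

lemma tw_dw: "v' \<notin> set ys \<Longrightarrow> takeWhile (\<lambda>x. x \<noteq> v') (ys @ v' # zs) = ys \<and> dropWhile (\<lambda>x. x \<noteq> v') (ys @ v' # zs) = v' # zs"
  by (induction ys) auto

definition dec_inv :: "nat \<Rightarrow> 'a list list \<Rightarrow> 'a list list \<times> 'a list list list \<Rightarrow> bool" where
  "dec_inv N \<omega> p = (let \<pi> = fst p; \<Gamma> = snd p in
     \<pi> \<noteq> [] \<and> hd \<pi> = hd \<omega> \<and> last \<pi> = last \<omega> \<and> distinct \<pi> \<and> set \<pi> \<subseteq> set \<omega> \<and> is_walk N \<pi> \<and>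
     (\<forall>\<gamma>\<in>set \<Gamma>. is_cycle N \<gamma> \<and> set \<gamma> \<subseteq> set \<omega>) \<and>
     (\<forall>f. wt f \<omega> = wt f \<pi> + sum_list (map (wt f) \<Gamma>)) \<and> conn \<pi> (set \<Gamma>))"

lemma dec_invariant: "is_walk N \<omega> \<Longrightarrow> dec_inv N \<omega> (dec \<omega>)"
proof (induction \<omega> rule: rev_induct)
  case Nil then show ?case by (simp add: is_walk_def)
next
  case (snoc v \<omega>)
  show ?case
  proof (cases "\<omega> = []")
    case True then show ?thesis using snoc.prems
      by (simp add: dec_def dec_inv_def wt_def conn_def)
  next
    case False
    with snoc.prems have w: "is_walk N \<omega>" and e: "db_edge N (last \<omega>) v" and lv: "length v = N"
      by (auto simp: walk_snoc)
    obtain \<pi> \<Gamma> where d: "dec \<omega> = (\<pi>, \<Gamma>)" by (cases "dec \<omega>")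
    have I: "\<pi> \<noteq> []" "hd \<pi> = hd \<omega>" "last \<pi> = last \<omega>" "distinct \<pi>" "set \<pi> \<subseteq> set \<omega>" "is_walk N \<pi>"
      "\<forall>\<gamma>\<in>set \<Gamma>. is_cycle N \<gamma> \<and> set \<gamma> \<subseteq> set \<omega>"
      "\<forall>f. wt f \<omega> = wt f \<pi> + sum_list (map (wt f) \<Gamma>)" "conn \<pi> (set \<Gamma>)"
      using snoc.IH[OF w] d by (auto simp: dec_inv_def Let_def)
    have ds: "dec (\<omega>@[v]) = dec_step v (\<pi>, \<Gamma>)" using False d dec_snoc by metis
    show ?thesis
    proof (cases "v \<in> set \<pi>")
      case False
      have st: "dec_step v (\<pi>, \<Gamma>) = (\<pi>@[v], \<Gamma>)" using False by (simp add: dec_step_def)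
      have "is_walk N (\<pi>@[v])" using I e lv by (simp add: walk_snoc)
      moreover have "conn (\<pi>@[v]) (set \<Gamma>)" using I(9) by (rule conn_mono) auto
      moreover have "\<forall>f. wt f (\<omega>@[v]) = wt f (\<pi>@[v]) + sum_list (map (wt f) \<Gamma>)"
        using I(1,8) \<open>\<omega> \<noteq> []\<close> by (simp add: wt_snoc)
      moreover have "\<forall>\<gamma>\<in>set \<Gamma>. is_cycle N \<gamma> \<and> set \<gamma> \<subseteq> set (\<omega>@[v])" using I(7) by auto
      moreover have "hd (\<pi>@[v]) = hd (\<omega>@[v])" using I(1,2) \<open>\<omega> \<noteq> []\<close> by simp
      moreover have "distinct (\<pi>@[v])" using I(4) False by simp
      moreover have "set (\<pi>@[v]) \<subseteq> set (\<omega>@[v])" using I(5) by auto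
      ultimately show ?thesis unfolding ds st dec_inv_def Let_def fst_conv snd_conv
        by simp
    next
      case True
      obtain ys zs where sp: "\<pi> = ys @ v # zs" "v \<notin> set ys" using split_list_first[OF True] by blast
      have st: "dec_step v (\<pi>, \<Gamma>) = (ys@[v], \<Gamma>@[v#zs@[v]])"
        using True tw_dw[OF sp(2), of zs] sp(1) by (simp add: dec_step_def)
      have pw: "is_walk N (ys@[v])" "is_walk N (v#zs)" using I(6) sp(1)
        walk_prefix[of N "ys@[v]" zs] walk_suffix[of N ys "v#zs"] by auto
      have lz: "last (v#zs) = last \<omega>" using I(3) sp(1) by simp
      have cyc: "is_cycle N (v#zs@[v])" unfolding is_cycle_def using pw lz e lv I(4) sp(1)
        by (simp add: walk_snoc[of "v#zs", simplified])
      have hd1: "hd (ys@[v]) = hd \<omega>" using I(2) sp(1) by (cases ys) auto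
      have conn': "conn (ys@[v]) (set (\<Gamma>@[v#zs@[v]]))"
        unfolding conn_def
      proof (intro allI impI)
        fix D assume D: "D \<subseteq> set (\<Gamma> @ [v # zs @ [v]])" "D \<noteq> set (\<Gamma> @ [v # zs @ [v]])"
        show "\<exists>\<gamma>\<in>set (\<Gamma> @ [v # zs @ [v]]) - D. set \<gamma> \<inter> (set (ys @ [v]) \<union> \<Union> (set ` D)) \<noteq> {}"
        proof (cases "v # zs @ [v] \<in> D")
          case False then show ?thesis by (intro bexI[of _ "v#zs@[v]"]) auto
        next
          case True
          let ?D = "D \<inter> set \<Gamma>"
          have "?D \<noteq> set \<Gamma>" using D True by auto
          moreover have sub: "?D \<subseteq> set \<Gamma>" by (rule Int_lower2)
          ultimately have "\<exists>\<gamma>\<in>set \<Gamma> - ?D. set \<gamma> \<inter> (set \<pi> \<union> \<Union> (set ` ?D)) \<noteq> {}"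
            using connD[OF I(9)] by simp
          then obtain \<gamma> where g: "\<gamma> \<in> set \<Gamma> - ?D" "set \<gamma> \<inter> (set \<pi> \<union> \<Union> (set ` ?D)) \<noteq> {}" ..
          have "set \<pi> \<subseteq> set (ys @ [v]) \<union> \<Union> (set ` D)" using True sp(1) by auto
          then have "set \<pi> \<union> \<Union> (set ` ?D) \<subseteq> set (ys @ [v]) \<union> \<Union> (set ` D)" by auto
          then have "set \<gamma> \<inter> (set (ys @ [v]) \<union> \<Union> (set ` D)) \<noteq> {}" using g(2) by auto
          moreover have g1: "\<gamma> \<in> set (\<Gamma>@[v#zs@[v]]) - D" using g(1) by auto
          ultimately show ?thesis by (rule bexI)
        qed
      qed
      show ?thesis unfolding ds st dec_inv_def Let_def fst_conv snd_conv
      proof (intro conjI allI)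
        fix f
        show "wt f (\<omega> @ [v]) = wt f (ys @ [v]) + sum_list (map (wt f) (\<Gamma> @ [v # zs @ [v]]))"
          using I(8) wt_split[of f ys v zs] sp(1) \<open>\<omega> \<noteq> []\<close> by (simp add: wt_snoc)
      next
        show "hd (ys @ [v]) = hd (\<omega> @ [v])" using hd1 \<open>\<omega> \<noteq> []\<close> by simp
      next
        show "distinct (ys @ [v])" using I(4) sp by simp
      next
        show "set (ys @ [v]) \<subseteq> set (\<omega> @ [v])" using I(5) sp by auto
      next
        show "\<forall>\<gamma>\<in>set (\<Gamma> @ [v # zs @ [v]]). is_cycle N \<gamma> \<and> set \<gamma> \<subseteq> set (\<omega> @ [v])"
          using I(7,5) sp cyc by auto
      qed (use pw conn' in simp_all)
    qed
  qed
qed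



lemma cnt_pos: "x \<in> set xs \<Longrightarrow> 0 < count_list xs x"
  using count_list_0_iff[of xs x] by simp


lemma cycle_not_distinct: "is_cycle N \<gamma> \<Longrightarrow> \<not> distinct \<gamma>"
proof
  assume c: "is_cycle N \<gamma>" and d: "distinct \<gamma>"
  from c have l: "length \<gamma> \<ge> 2" and h: "hd \<gamma> = last \<gamma>" by (auto simp: is_cycle_def)
  obtain a ys where g0: "\<gamma> = a # ys" using l by (cases \<gamma>) auto
  have g: "\<gamma> = a # ys" "ys \<noteq> []" using g0 l by auto
  then have "last \<gamma> = last ys" "last ys \<in> set ys" by auto
  then show False using d g h by auto
qed

lemma dec_facts:
  assumes "is_walk N \<omega>"
  shows "fst (dec \<omega>) \<in> tr \<omega>" "tr \<omega> = insert (fst (dec \<omega>)) (set (snd (dec \<omega>)))"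
    "fst (dec \<omega>) \<notin> set (snd (dec \<omega>))" "is_path N (fst (dec \<omega>))"
    "tr \<omega> - {fst (dec \<omega>)} = set (snd (dec \<omega>))"
    "\<And>\<pi>. \<pi> \<in> tr \<omega> \<Longrightarrow> is_path N \<pi> \<Longrightarrow> \<pi> = fst (dec \<omega>)"
proof -
  have I: "dec_inv N \<omega> (dec \<omega>)" using dec_invariant[OF assms] .
  have cyc: "\<forall>\<gamma>\<in>set (snd (dec \<omega>)). is_cycle N \<gamma>" using I by (simp add: dec_inv_def Let_def)
  show t: "tr \<omega> = insert (fst (dec \<omega>)) (set (snd (dec \<omega>)))"
    unfolding tr_def mtr_def using cnt_pos by (auto simp: count_list_0_iff)
  show "fst (dec \<omega>) \<in> tr \<omega>" using t by simp
  show n: "fst (dec \<omega>) \<notin> set (snd (dec \<omega>))"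
    using I cyc cycle_not_distinct by (fastforce simp: dec_inv_def Let_def)
  show "is_path N (fst (dec \<omega>))" using I by (simp add: dec_inv_def Let_def is_path_def)
  show "tr \<omega> - {fst (dec \<omega>)} = set (snd (dec \<omega>))" using t n by auto
  fix \<pi> assume "\<pi> \<in> tr \<omega>" "is_path N \<pi>"
  then show "\<pi> = fst (dec \<omega>)" using t cyc cycle_not_distinct by (auto simp: is_path_def)
qed

lemma wt_one: "wt (\<lambda>_. 1) xs = length xs - 1"
  by (simp add: wt_def sum_list_triv)

lemma walk_glue:
  assumes "is_walk N A" "is_walk N B" "last A = hd B"
  shows "is_walk N (A @ tl B)" "hd (A @ tl B) = hd A" "last (A @ tl B) = last B"
    "set (A @ tl B) = set A \<union> set B" "wt f (A @ tl B) = wt f A + wt f B"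
proof -
  have A: "A \<noteq> []" and B: "B \<noteq> []" using assms by (auto simp: is_walk_def)
  obtain b bs where b: "B = b # bs" using B by (cases B) auto
  show "is_walk N (A @ tl B)"
  proof (cases bs)
    case Nil then show ?thesis using assms(1) b by simp
  next
    case (Cons c cs)
    have "db_edge N b c" using assms(2) b Cons unfolding is_walk_succ by simp
    moreover have "is_walk N bs" using walk_suffix[of N "[b]" bs] assms(2) b Cons by simp
    ultimately show ?thesis using assms A b Cons by (simp add: walk_append)
  qed
  show "hd (A @ tl B) = hd A" using A by simp
  show "last (A @ tl B) = last B" using assms(3) b A by (cases bs) auto
  show "set (A @ tl B) = set A \<union> set B" using assms(3) b A by auto
  show "wt f (A @ tl B) = wt f A + wt f B" using A b by (cases A) (auto simp: wt_def)
qed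

lemma rotate_cycle:
  assumes "is_walk N \<gamma>" "hd \<gamma> = last \<gamma>" "u \<in> set \<gamma>"
  shows "\<exists>\<rho>. is_walk N \<rho> \<and> hd \<rho> = u \<and> last \<rho> = u \<and> set \<rho> = set \<gamma> \<and> (\<forall>f. wt f \<rho> = wt f \<gamma>)"
proof -
  obtain g1 g2 where sp: "\<gamma> = g1 @ u # g2" using split_list[OF assms(3)] by blast
  show ?thesis
  proof (cases g1)
    case Nil then show ?thesis using assms sp by (intro exI[of _ \<gamma>]) auto
  next
    case (Cons a as)
    have w1: "is_walk N (u # g2)" using walk_suffix[of N g1 "u#g2"] assms(1) sp by simp
    have w2: "is_walk N (g1 @ [u])" using walk_prefix[of N "g1@[u]" g2] assms(1) sp by simp
    have lh: "last (u # g2) = hd (g1 @ [u])" using assms(2) sp Cons by (cases g2) auto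
    note G = walk_glue[OF w1 w2 lh]
    have "set (u # g2) \<union> set (g1 @ [u]) = set \<gamma>" using sp by auto
    moreover have "\<forall>f. wt f (u # g2) + wt f (g1 @ [u]) = wt f \<gamma>" using sp Cons by (simp add: wt_def)
    ultimately show ?thesis using G by (intro exI[of _ "(u # g2) @ tl (g1 @ [u])"]) auto
  qed
qed

lemma insert_cycle:
  assumes "is_walk N W" "is_walk N \<gamma>" "hd \<gamma> = last \<gamma>" "u \<in> set W" "u \<in> set \<gamma>"
  shows "\<exists>W'. is_walk N W' \<and> hd W' = hd W \<and> last W' = last W \<and> set W' = set W \<union> set \<gamma> \<and>
     (\<forall>f. wt f W' = wt f W + wt f \<gamma>)"
proof -
  obtain \<rho> where r: "is_walk N \<rho>" "hd \<rho> = u" "last \<rho> = u" "set \<rho> = set \<gamma>" "\<forall>f. wt f \<rho> = wt f \<gamma>"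
    using rotate_cycle[OF assms(2,3,5)] by blast
  obtain W1 W2 where sp: "W = W1 @ u # W2" using split_list[OF assms(4)] by blast
  have w1: "is_walk N (W1 @ [u])" using walk_prefix[of N "W1@[u]" W2] assms(1) sp by simp
  have w2: "is_walk N (u # W2)" using walk_suffix[of N W1 "u#W2"] assms(1) sp by simp
  have l1: "last (W1 @ [u]) = hd \<rho>" using r by simp
  note G1 = walk_glue[OF w1 r(1) l1]
  have l2: "last ((W1 @ [u]) @ tl \<rho>) = hd (u # W2)" using G1(3) r(3) by simp
  note G2 = walk_glue[OF G1(1) w2 l2]
  have l3: "last (W1 @ [u]) = hd (u # W2)" by simp
  note G3 = walk_glue[OF w1 w2 l3]
  have WW: "W = (W1 @ [u]) @ tl (u # W2)" using sp by simp
  show ?thesis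
    apply (intro exI[of _ "((W1 @ [u]) @ tl \<rho>) @ tl (u # W2)"])
    using G1 G2 G3 r WW by (simp only:) auto
qed

lemma insert_cycle_k:
  assumes "is_walk N W" "is_walk N \<gamma>" "hd \<gamma> = last \<gamma>" "u \<in> set W" "u \<in> set \<gamma>" "k \<ge> 1"
  shows "\<exists>W'. is_walk N W' \<and> hd W' = hd W \<and> set W' = set W \<union> set \<gamma> \<and>
     (\<forall>f. wt f W' = wt f W + k * wt f \<gamma>)"
  using assms(6)
proof (induction k rule: dec_induct)
  case base then show ?case using insert_cycle[OF assms(1-5)] by auto
next
  case (step k)
  then obtain W' where W': "is_walk N W'" "hd W' = hd W" "set W' = set W \<union> set \<gamma>"
     "\<forall>f. wt f W' = wt f W + k * wt f \<gamma>" by blast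
  have "u \<in> set W'" using W'(3) assms(4) by blast
  from insert_cycle[OF W'(1) assms(2,3) this assms(5)] obtain W'' where
    "is_walk N W''" "hd W'' = hd W'" "set W'' = set W' \<union> set \<gamma>" "\<forall>f. wt f W'' = wt f W' + wt f \<gamma>"
    by blast
  then show ?case using W' by (intro exI[of _ W'']) auto
qed

lemma realize:
  assumes "finite C" "conn \<pi> C" "\<forall>\<gamma>\<in>C. is_cycle N \<gamma>" "is_walk N \<pi>" "\<forall>\<gamma>\<in>C. x \<gamma> \<ge> 1"
  shows "\<exists>W. is_walk N W \<and> hd W = hd \<pi> \<and> (\<forall>f. wt f W = wt f \<pi> + (\<Sum>\<gamma>\<in>C. x \<gamma> * wt f \<gamma>))"
proof -
  have "n \<le> card C \<Longrightarrow> \<exists>D\<subseteq>C. card D = n \<and> (\<exists>W. is_walk N W \<and> hd W = hd \<pi> \<and>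
      set W = set \<pi> \<union> \<Union>(set ` D) \<and> (\<forall>f. wt f W = wt f \<pi> + (\<Sum>\<gamma>\<in>D. x \<gamma> * wt f \<gamma>)))" for n
  proof (induction n)
    case 0 then show ?case using assms(4) by (intro exI[of _ "{}"]) auto
  next
    case (Suc n)
    have "n \<le> card C" using Suc.prems by simp
    from Suc.IH[OF this] obtain D W where D: "D \<subseteq> C" "card D = n" and W: "is_walk N W" "hd W = hd \<pi>"
      "set W = set \<pi> \<union> \<Union>(set ` D)" "\<forall>f. wt f W = wt f \<pi> + (\<Sum>\<gamma>\<in>D. x \<gamma> * wt f \<gamma>)"
      by (elim exE conjE) (rule that, assumption+)
    have "D \<noteq> C" using D Suc.prems by auto
    from connD[OF assms(2) D(1) this] obtain \<gamma> where g: "\<gamma> \<in> C - D"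
      "set \<gamma> \<inter> (set \<pi> \<union> \<Union>(set ` D)) \<noteq> {}" ..
    then obtain u where u: "u \<in> set W" "u \<in> set \<gamma>" using W(3) by blast
    have cg: "is_walk N \<gamma>" "hd \<gamma> = last \<gamma>" using assms(3) g(1) by (auto simp: is_cycle_def)
    have "x \<gamma> \<ge> 1" using assms(5) g(1) by blast
    from insert_cycle_k[OF W(1) cg u this] obtain W' where W': "is_walk N W'" "hd W' = hd W"
      "set W' = set W \<union> set \<gamma>" "\<forall>f. wt f W' = wt f W + x \<gamma> * wt f \<gamma>" by blast
    have fD: "finite D" using D(1) assms(1) finite_subset by blast
    have gD: "\<gamma> \<notin> D" using g by blast
    show ?case
    proof (intro exI[of _ "insert \<gamma> D"] conjI exI[of _ W'])
      show "insert \<gamma> D \<subseteq> C" using D g by blast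
      show "card (insert \<gamma> D) = Suc n" using fD gD D by simp
      show "is_walk N W'" by fact
      show "hd W' = hd \<pi>" using W' W by simp
      show "set W' = set \<pi> \<union> \<Union> (set ` insert \<gamma> D)" using W' W by auto
      show "\<forall>f. wt f W' = wt f \<pi> + (\<Sum>\<gamma>\<in>insert \<gamma> D. x \<gamma> * wt f \<gamma>)"
        using W' W fD gD by (simp add: sum.insert)
    qed
  qed
  from this[OF order_refl] obtain D W where "D \<subseteq> C" "card D = card C" "is_walk N W" "hd W = hd \<pi>"
    "\<forall>f. wt f W = wt f \<pi> + (\<Sum>\<gamma>\<in>D. x \<gamma> * wt f \<gamma>)" by blast
  moreover then have "D = C" using assms(1) card_subset_eq by blast
  ultimately show ?thesis by blast
qed

lemma vdiff_zero_iff: "vdiff k v = 0 \<longleftrightarrow> (\<forall>i<k. \<forall>j<k. v i = v j)"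
proof
  assume h: "vdiff k v = 0"
  have "\<forall>i<k. Max (v ` {..<k}) - v i = 0" using h unfolding vdiff_def by simp
  moreover have "\<forall>i<k. v i \<le> Max (v ` {..<k})" by simp
  ultimately have "\<forall>i<k. v i = Max (v ` {..<k})" by (metis diff_is_0_eq le_antisym)
  then show "\<forall>i<k. \<forall>j<k. v i = v j" by simp
next
  assume h: "\<forall>i<k. \<forall>j<k. v i = v j"
  show "vdiff k v = 0"
  proof (cases "k = 0")
    case True then show ?thesis by (simp add: vdiff_def)
  next
    case False
    have h0: "\<forall>i<k. v i = v 0"
    proof (intro allI impI)
      fix i assume "i < k" then show "v i = v 0" using h[rule_format, of i 0] False by blast
    qed
    have h0': "\<And>i. i < k \<Longrightarrow> v i = v 0" using h0 by blast
    have im: "v ` {..<k} = {v 0}"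
    proof
      show "v ` {..<k} \<subseteq> {v 0}" by (rule image_subsetI) (metis h0' lessThan_iff singletonI)
      show "{v 0} \<subseteq> v ` {..<k}" using False by simp
    qed
    have "\<forall>i\<in>{..<k}. Max (v ` {..<k}) - v i = 0"
      using im h0' by (metis Max_singleton diff_self_eq_0 lessThan_iff)
    then show ?thesis unfolding vdiff_def by (rule sum.neutral)
  qed
qed

lemma nat_mono_sub: fixes a :: "nat \<Rightarrow> nat"
  shows "\<exists>\<tau>::nat\<Rightarrow>nat. strict_mono \<tau> \<and> (\<forall>i j. i \<le> j \<longrightarrow> a (\<tau> i) \<le> a (\<tau> j))"
proof -
  obtain f where f: "strict_mono f" "monoseq (\<lambda>n. a (f n))" using seq_monosub by blast
  show ?thesis
  proof (cases "incseq (\<lambda>n. a (f n))")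
    case True
    show ?thesis
    proof (rule exI[of _ f], intro conjI)
      show "strict_mono f" by fact
      show "\<forall>i j. i \<le> j \<longrightarrow> a (f i) \<le> a (f j)" using True unfolding incseq_def .
    qed
  next
    case False
    then have dec: "decseq (\<lambda>n. a (f n))" using f(2) monoseq_iff by blast
    define b where "b = (\<lambda>n. a (f n))"
    define m where "m = (LEAST v. v \<in> range b)"
    have "m \<in> range b" unfolding m_def by (rule LeastI[of _ "b 0"]) simp
    then obtain K where K: "b K = m" by blast
    have mle: "m \<le> b n" for n unfolding m_def by (rule Least_le) simp
    have const: "b n = m" if "n \<ge> K" for n using dec that mle[of n] K
      unfolding b_def decseq_def by (metis le_antisym)
    show ?thesis
    proof (intro exI[of _ "f \<circ> (\<lambda>n. n + K)"] conjI allI impI)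
      show "strict_mono (f \<circ> (\<lambda>n. n + K))" using f(1) by (simp add: strict_mono_def)
      fix i j :: nat assume "i \<le> j"
      show "a ((f \<circ> (\<lambda>n. n + K)) i) \<le> a ((f \<circ> (\<lambda>n. n + K)) j)"
        using const[of "i+K"] const[of "j+K"] unfolding b_def by simp
    qed
  qed
qed

lemma dickson_seq: fixes s :: "nat \<Rightarrow> 'c \<Rightarrow> nat" shows "finite C \<Longrightarrow> \<exists>\<sigma>::nat\<Rightarrow>nat. strict_mono \<sigma> \<and> (\<forall>i j. i \<le> j \<longrightarrow> (\<forall>c\<in>C. (s (\<sigma> i) c :: nat) \<le> s (\<sigma> j) c))"
proof (induction C rule: finite_induct)
  case empty then show ?case by (intro exI[of _ id]) (auto simp: strict_mono_def)
next
  case (insert c C)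
  from insert.IH obtain \<sigma> :: "nat \<Rightarrow> nat" where \<sigma>: "strict_mono \<sigma>" "\<forall>i j. i \<le> j \<longrightarrow> (\<forall>c\<in>C. s (\<sigma> i) c \<le> s (\<sigma> j) c)" by auto
  obtain \<tau> :: "nat \<Rightarrow> nat" where \<tau>: "strict_mono \<tau>" "\<forall>i j. i \<le> j \<longrightarrow> s (\<sigma> (\<tau> i)) c \<le> s (\<sigma> (\<tau> j)) c"
    using nat_mono_sub[of "\<lambda>n. s (\<sigma> n) c"] by auto
  show ?case
  proof (intro exI[of _ "\<sigma> \<circ> \<tau>"] conjI allI impI ballI)
    show "strict_mono (\<sigma> \<circ> \<tau>)" using \<sigma>(1) \<tau>(1) by (rule strict_mono_o)
    fix i j :: nat and d assume ij: "i \<le> j" and d: "d \<in> insert c C"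
    have "\<tau> i \<le> \<tau> j" using \<tau>(1) ij by (simp add: strict_mono_less_eq)
    then show "s ((\<sigma> \<circ> \<tau>) i) d \<le> s ((\<sigma> \<circ> \<tau>) j) d" using d \<sigma>(2) \<tau>(2) ij by auto
  qed
qed

lemma dickson_set:
  assumes "infinite M" "finite C" "\<forall>h\<in>M. \<forall>\<gamma>. \<gamma> \<notin> C \<longrightarrow> h \<gamma> = (0::nat)"
  shows "\<exists>h1\<in>M. \<exists>h2\<in>M. h1 \<noteq> h2 \<and> (\<forall>\<gamma>. h1 \<gamma> \<le> h2 \<gamma>)"
proof -
  obtain s :: "nat \<Rightarrow> _" where s: "inj s" "range s \<subseteq> M"
    using assms(1) unfolding infinite_iff_countable_subset by auto
  obtain \<sigma> :: "nat \<Rightarrow> nat" where \<sigma>: "strict_mono \<sigma>" "\<forall>i j. i \<le> j \<longrightarrow> (\<forall>c\<in>C. s (\<sigma> i) c \<le> s (\<sigma> j) c)"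
    using dickson_seq[OF assms(2), of s] by auto
  have "\<sigma> 0 \<noteq> \<sigma> 1" using \<sigma>(1) by (metis strict_mono_eq zero_neq_one)
  then have ne: "s (\<sigma> 0) \<noteq> s (\<sigma> 1)" using s(1) by (meson injD)
  have m: "s (\<sigma> 0) \<in> M" "s (\<sigma> 1) \<in> M" using s(2) by auto
  have "\<forall>\<gamma>. s (\<sigma> 0) \<gamma> \<le> s (\<sigma> 1) \<gamma>"
  proof
    fix \<gamma> show "s (\<sigma> 0) \<gamma> \<le> s (\<sigma> 1) \<gamma>"
      using \<sigma>(2) assms(3) m by (cases "\<gamma> \<in> C") auto
  qed
  then show ?thesis using ne m by blast
qed



lemma sum_split_lin: "(\<Sum>\<gamma>\<in>C. (x \<gamma> + t * y \<gamma>) * (g \<gamma>::nat)) = (\<Sum>\<gamma>\<in>C. x \<gamma> * g \<gamma>) + t * (\<Sum>\<gamma>\<in>C. y \<gamma> * g \<gamma>)"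
  by (simp add: sum.distrib sum_distrib_left algebra_simps)

lemma occ_walk_wt: "occ_walk ws \<omega> i = wt (\<lambda>v. suf_vec ws v i) \<omega>"
  by (simp add: occ_walk_def wt_def)

lemma nocc_main:
  assumes "is_walk N \<omega>" "i < length ws" "length (ws!i) \<le> N"
  shows "nocc (ws!i) (word \<omega>) = occ_word ws (hd \<omega>) i + occ_walk ws \<omega> i"
proof -
  have "map (\<lambda>v. if suffix (ws!i) v then 1 else 0) (tl \<omega>) = map (\<lambda>v. suf_vec ws v i) (tl \<omega>)"
    using assms(2) by (simp add: suf_vec_def)
  then have s: "(\<Sum>v\<leftarrow>tl \<omega>. if suffix (ws!i) v then 1 else 0) = (\<Sum>v\<leftarrow>tl \<omega>. suf_vec ws v i)"
    by (rule arg_cong)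
  show ?thesis using nocc_word[OF assms(1,3)] assms(2) unfolding occ_word_def occ_walk_def s[symmetric]
    by simp
qed

theorem theorem1:
  fixes ws :: "('a::finite) list list" and N :: nat
  assumes "ws \<noteq> []"
    and "N = Max (length ` set ws)"
    and "N \<ge> 1"
  shows "infinite (WMIX ws) \<longleftrightarrow>
    (\<exists>\<omega> \<pi>. is_walk N \<omega> \<and> \<pi> \<in> tr \<omega> \<and> is_path N \<pi> \<and>
       (let C = tr \<omega> - {\<pi>}; k = length ws in
         (\<exists>x :: 'a list list \<Rightarrow> nat. (\<forall>\<gamma>\<in>C. x \<gamma> \<ge> 1) \<and>
            vdiff k (\<lambda>i. occ_word ws (hd \<pi>) i + occ_walk ws \<pi> i
                        + (\<Sum>\<gamma>\<in>C. x \<gamma> * occ_walk ws \<gamma> i)) = 0) \<and>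
         (\<exists>y :: 'a list list \<Rightarrow> nat. (\<exists>\<gamma>\<in>C. y \<gamma> \<noteq> 0) \<and>
            vdiff k (\<lambda>i. \<Sum>\<gamma>\<in>C. y \<gamma> * occ_walk ws \<gamma> i) = 0)))"
proof -
  define k where "k = length ws"
  have lenN: "length (ws!i) \<le> N" if "i < k" for i
    using that assms(2) unfolding k_def by simp
  have nm: "nocc (ws!i) (word \<omega>) = occ_word ws (hd \<omega>) i + occ_walk ws \<omega> i"
    if "is_walk N \<omega>" "i < k" for \<omega> i
    using nocc_main[OF that(1) _ lenN[OF that(2)]] that(2) unfolding k_def by simp
  have WM: "w \<in> WMIX ws \<longleftrightarrow> (\<forall>i<k. \<forall>j<k. nocc (ws!i) w = nocc (ws!j) w)" for w
    unfolding WMIX_def k_def by simp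
  define V where "V = {v::'a list. length v = N}"
  have finV: "finite V"
  proof -
    have "V = {xs. set xs \<subseteq> UNIV \<and> length xs = N}" unfolding V_def by simp
    then show ?thesis using finite_lists_length_eq[OF finite_UNIV] by simp
  qed
  have walkV: "set \<omega> \<subseteq> V" if "is_walk N \<omega>" for \<omega>
    using that unfolding is_walk_def V_def by auto
  show ?thesis
  proof
    assume inf: "infinite (WMIX ws)"
    define S where "S = {\<omega>. is_walk N \<omega> \<and> word \<omega> \<in> WMIX ws}"
    have infS: "infinite S"
    proof
      assume fS: "finite S"
      have "WMIX ws \<subseteq> word ` S \<union> {xs. set xs \<subseteq> UNIV \<and> length xs \<le> N}"
      proof
        fix w assume w: "w \<in> WMIX ws"
        show "w \<in> word ` S \<union> {xs. set xs \<subseteq> UNIV \<and> length xs \<le> N}"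
        proof (cases "length w \<ge> N")
          case True
          then obtain \<omega> where "is_walk N \<omega>" "word \<omega> = w" using word_surj assms(3) by blast
          then show ?thesis using w unfolding S_def by blast
        next
          case False then show ?thesis by simp
        qed
      qed
      moreover have "finite (word ` S \<union> {xs. set xs \<subseteq> UNIV \<and> length xs \<le> N})"
        using fS finite_lists_length_le[OF finite_UNIV] by blast
      ultimately show False using inf finite_subset by blast
    qed
    define g where "g = (\<lambda>\<omega>::'a list list. (fst (dec \<omega>), set (snd (dec \<omega>))))"
    define LB where "LB = {xs. set xs \<subseteq> V \<and> length xs \<le> Suc (card V)}"
    have finLB: "finite LB" unfolding LB_def using finite_lists_length_le[OF finV] .
    have "g ` S \<subseteq> LB \<times> Pow LB"
    proof
      fix p assume "p \<in> g ` S"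
      then obtain \<omega> where \<omega>: "\<omega> \<in> S" "p = g \<omega>" by blast
      have w: "is_walk N \<omega>" using \<omega> S_def by blast
      have I: "dec_inv N \<omega> (dec \<omega>)" by (rule dec_invariant[OF w])
      have sV: "set \<omega> \<subseteq> V" by (rule walkV[OF w])
      have p1: "fst (dec \<omega>) \<in> LB"
      proof -
        have d: "distinct (fst (dec \<omega>))" "set (fst (dec \<omega>)) \<subseteq> set \<omega>"
          using I by (auto simp: dec_inv_def Let_def)
        then have "length (fst (dec \<omega>)) = card (set (fst (dec \<omega>)))" by (simp add: distinct_card)
        also have "\<dots> \<le> card V" using d sV finV by (meson card_mono order_trans)
        finally show ?thesis using d sV unfolding LB_def by auto
      qed
      have p2: "set (snd (dec \<omega>)) \<subseteq> LB"
      proof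
        fix \<gamma> assume g: "\<gamma> \<in> set (snd (dec \<omega>))"
        then have c: "is_cycle N \<gamma>" "set \<gamma> \<subseteq> set \<omega>" using I by (auto simp: dec_inv_def Let_def)
        then have ne: "\<gamma> \<noteq> []" and db: "distinct (butlast \<gamma>)" by (auto simp: is_cycle_def)
        have "set (butlast \<gamma>) \<subseteq> V" using c(2) sV in_set_butlastD by fastforce
        then have "length (butlast \<gamma>) \<le> card V" using db finV
          by (metis card_mono distinct_card)
        then have "length \<gamma> \<le> Suc (card V)" using ne by simp
        then show "\<gamma> \<in> LB" using c(2) sV unfolding LB_def by auto
      qed
      show "p \<in> LB \<times> Pow LB" using \<omega>(2) p1 p2 unfolding g_def by auto
    qed
    then have "finite (g ` S)" using finLB finite_subset by blast
    from pigeonhole_infinite[OF infS this] obtain \<omega>0 where \<omega>0: "\<omega>0 \<in> S"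
      and infF: "infinite {\<omega>\<in>S. g \<omega> = g \<omega>0}" by blast
    define F where "F = {\<omega>\<in>S. g \<omega> = g \<omega>0}"
    define \<pi>0 where "\<pi>0 = fst (dec \<omega>0)"
    define C where "C = set (snd (dec \<omega>0))"
    define m where "m = (\<lambda>\<omega>::'a list list. count_list (snd (dec \<omega>)))"
    have finC: "finite C" unfolding C_def by simp
    have w0: "is_walk N \<omega>0" using \<omega>0 S_def by blast
    have F0: "\<omega>0 \<in> F" using \<omega>0 unfolding F_def by simp
    have Fw: "is_walk N \<omega>" "word \<omega> \<in> WMIX ws" if "\<omega> \<in> F" for \<omega>
      using that unfolding F_def S_def by auto
    have Fkey: "hd \<omega> = hd \<pi>0 \<and> (\<forall>f. wt f \<omega> = wt f \<pi>0 + (\<Sum>\<gamma>\<in>C. m \<omega> \<gamma> * wt f \<gamma>))"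
      if "\<omega> \<in> F" for \<omega>
    proof -
      have w: "is_walk N \<omega>" using Fw that by blast
      have I: "dec_inv N \<omega> (dec \<omega>)" by (rule dec_invariant[OF w])
      have eq: "fst (dec \<omega>) = \<pi>0" "set (snd (dec \<omega>)) = C"
        using that unfolding F_def g_def \<pi>0_def C_def by auto
      have "hd \<omega> = hd \<pi>0" using I eq by (simp add: dec_inv_def Let_def)
      moreover have "wt f \<omega> = wt f \<pi>0 + (\<Sum>\<gamma>\<in>C. m \<omega> \<gamma> * wt f \<gamma>)" for f
      proof -
        have "wt f \<omega> = wt f (fst (dec \<omega>)) + sum_list (map (wt f) (snd (dec \<omega>)))"
          using I by (simp add: dec_inv_def Let_def)
        then show ?thesis using eq unfolding m_def by (simp add: sum_list_map_eq_sum_count)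
      qed
      ultimately show ?thesis by blast
    qed
    have m0: "m \<omega> \<gamma> = 0" if "\<omega> \<in> F" "\<gamma> \<notin> C" for \<omega> \<gamma>
    proof -
      have "set (snd (dec \<omega>)) = C" using that unfolding F_def g_def C_def by auto
      then show ?thesis using that(2) unfolding m_def by (simp add: count_list_0_iff)
    qed
    define val where "val = (\<lambda>\<omega> i. occ_word ws (hd \<pi>0) i + occ_walk ws \<pi>0 i
        + (\<Sum>\<gamma>\<in>C. m \<omega> \<gamma> * occ_walk ws \<gamma> i))"
    have valeq: "nocc (ws!i) (word \<omega>) = val \<omega> i" if "\<omega> \<in> F" "i < k" for \<omega> i
      using nm[OF Fw(1)[OF that(1)] that(2)] Fkey[OF that(1)] unfolding val_def occ_walk_wt
      by simp
    have valconst: "val \<omega> i = val \<omega> j" if "\<omega> \<in> F" "i < k" "j < k" for \<omega> i j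
      using valeq[OF that(1,2)] valeq[OF that(1,3)] Fw(2)[OF that(1)] that(2,3) WM by metis
    have infM: "infinite (m ` F)"
    proof
      assume fM: "finite (m ` F)"
      define h where "h = (\<lambda>mu. Suc (wt (\<lambda>_. 1) \<pi>0 + (\<Sum>\<gamma>\<in>C. mu \<gamma> * wt (\<lambda>_. 1) \<gamma>)))"
      have "length ` F \<subseteq> h ` (m ` F)"
      proof
        fix l assume "l \<in> length ` F"
        then obtain \<omega> where o: "\<omega> \<in> F" "l = length \<omega>" by blast
        have "\<omega> \<noteq> []" using Fw(1)[OF o(1)] by (simp add: is_walk_def)
        then have "length \<omega> = Suc (wt (\<lambda>_. 1) \<omega>)" using wt_one[of \<omega>] by simp
        then have "l = h (m \<omega>)" using Fkey[OF o(1)] o(2) unfolding h_def by simp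
        then show "l \<in> h ` (m ` F)" using o(1) by blast
      qed
      then have "finite (length ` F)" using fM finite_subset by blast
      then obtain L where L: "\<forall>l\<in>length ` F. l \<le> L" using finite_nat_set_iff_bounded_le by blast
      have "F \<subseteq> {xs. set xs \<subseteq> V \<and> length xs \<le> L}"
        using L walkV Fw(1) by auto
      then have "finite F" using finite_lists_length_le[OF finV] finite_subset by blast
      then show False using infF unfolding F_def by blast
    qed
    have supp: "\<forall>h\<in>m ` F. \<forall>\<gamma>. \<gamma> \<notin> C \<longrightarrow> h \<gamma> = 0"
    proof (intro ballI allI impI)
      fix h \<gamma> assume "h \<in> m ` F" "\<gamma> \<notin> C"
      then obtain \<omega> where "\<omega> \<in> F" "h = m \<omega>" by (auto simp: image_iff)
      then show "h \<gamma> = 0" using m0 \<open>\<gamma> \<notin> C\<close> by simp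
    qed
    from dickson_set[OF infM finC supp] obtain h1 h2 where
      h: "h1 \<in> m ` F" "h2 \<in> m ` F" "h1 \<noteq> h2" "\<forall>\<gamma>. h1 \<gamma> \<le> h2 \<gamma>" by blast
    then obtain \<omega>1 \<omega>2 where o12: "\<omega>1 \<in> F" "\<omega>2 \<in> F" "m \<omega>1 = h1" "m \<omega>2 = h2" by blast
    define y where "y = (\<lambda>\<gamma>. h2 \<gamma> - h1 \<gamma>)"
    have yC: "\<exists>\<gamma>\<in>C. y \<gamma> \<noteq> 0"
    proof -
      obtain \<gamma> where "h1 \<gamma> \<noteq> h2 \<gamma>" using h(3) by blast
      moreover then have "\<gamma> \<in> C" using supp h(1,2) by metis
      ultimately show ?thesis using h(4) unfolding y_def
        by (metis diff_is_0_eq le_antisym)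
    qed
    have h2eq: "h2 \<gamma> = h1 \<gamma> + y \<gamma>" for \<gamma> using h(4) unfolding y_def by (simp add: le_add_diff_inverse)
    have ysum: "(\<Sum>\<gamma>\<in>C. h2 \<gamma> * occ_walk ws \<gamma> i) = (\<Sum>\<gamma>\<in>C. h1 \<gamma> * occ_walk ws \<gamma> i) + (\<Sum>\<gamma>\<in>C. y \<gamma> * occ_walk ws \<gamma> i)" for i
      unfolding h2eq by (simp add: sum.distrib algebra_simps)
    have yconst: "(\<Sum>\<gamma>\<in>C. y \<gamma> * occ_walk ws \<gamma> i) = (\<Sum>\<gamma>\<in>C. y \<gamma> * occ_walk ws \<gamma> j)"
      if "i < k" "j < k" for i j
    proof -
      have "val \<omega>2 i = val \<omega>2 j" by (rule valconst[OF o12(2) that])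
      moreover have "val \<omega>1 i = val \<omega>1 j" by (rule valconst[OF o12(1) that])
      ultimately
      show ?thesis unfolding val_def o12(3,4) ysum by simp
    qed
    have p: "\<pi>0 \<in> tr \<omega>0" "is_path N \<pi>0" "tr \<omega>0 - {\<pi>0} = C"
      using dec_facts(1,4,5)[OF w0] unfolding \<pi>0_def C_def by auto
    have xpos: "\<forall>\<gamma>\<in>C. m \<omega>0 \<gamma> \<ge> 1"
    proof
      fix \<gamma> assume "\<gamma> \<in> C"
      then show "m \<omega>0 \<gamma> \<ge> 1" using cnt_pos[of \<gamma> "snd (dec \<omega>0)"] unfolding m_def C_def by simp
    qed
    have bal: "vdiff k (val \<omega>0) = 0"
      unfolding vdiff_zero_iff using valconst[OF F0] by (intro allI impI)
    have pump: "vdiff k (\<lambda>i. \<Sum>\<gamma>\<in>C. y \<gamma> * occ_walk ws \<gamma> i) = 0"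
      unfolding vdiff_zero_iff using yconst by (intro allI impI)
    have A: "\<exists>x :: 'a list list \<Rightarrow> nat. (\<forall>\<gamma>\<in>tr \<omega>0 - {\<pi>0}. x \<gamma> \<ge> 1) \<and>
            vdiff (length ws) (\<lambda>i. occ_word ws (hd \<pi>0) i + occ_walk ws \<pi>0 i
                        + (\<Sum>\<gamma>\<in>tr \<omega>0 - {\<pi>0}. x \<gamma> * occ_walk ws \<gamma> i)) = 0"
      using xpos bal unfolding p(3) val_def k_def by blast
    have B: "\<exists>y :: 'a list list \<Rightarrow> nat. (\<exists>\<gamma>\<in>tr \<omega>0 - {\<pi>0}. y \<gamma> \<noteq> 0) \<and>
            vdiff (length ws) (\<lambda>i. \<Sum>\<gamma>\<in>tr \<omega>0 - {\<pi>0}. y \<gamma> * occ_walk ws \<gamma> i) = 0"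
      using yC pump unfolding p(3) k_def by blast
    show "\<exists>\<omega> \<pi>. is_walk N \<omega> \<and> \<pi> \<in> tr \<omega> \<and> is_path N \<pi> \<and>
       (let C = tr \<omega> - {\<pi>}; k = length ws in
         (\<exists>x :: 'a list list \<Rightarrow> nat. (\<forall>\<gamma>\<in>C. x \<gamma> \<ge> 1) \<and>
            vdiff k (\<lambda>i. occ_word ws (hd \<pi>) i + occ_walk ws \<pi> i
                        + (\<Sum>\<gamma>\<in>C. x \<gamma> * occ_walk ws \<gamma> i)) = 0) \<and>
         (\<exists>y :: 'a list list \<Rightarrow> nat. (\<exists>\<gamma>\<in>C. y \<gamma> \<noteq> 0) \<and>
            vdiff k (\<lambda>i. \<Sum>\<gamma>\<in>C. y \<gamma> * occ_walk ws \<gamma> i) = 0))"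
      unfolding Let_def
      apply (rule exI[of _ \<omega>0], rule exI[of _ \<pi>0])
      using w0 p(1,2) A B by simp
  next
    assume "\<exists>\<omega> \<pi>. is_walk N \<omega> \<and> \<pi> \<in> tr \<omega> \<and> is_path N \<pi> \<and>
       (let C = tr \<omega> - {\<pi>}; k = length ws in
         (\<exists>x :: 'a list list \<Rightarrow> nat. (\<forall>\<gamma>\<in>C. x \<gamma> \<ge> 1) \<and>
            vdiff k (\<lambda>i. occ_word ws (hd \<pi>) i + occ_walk ws \<pi> i
                        + (\<Sum>\<gamma>\<in>C. x \<gamma> * occ_walk ws \<gamma> i)) = 0) \<and>
         (\<exists>y :: 'a list list \<Rightarrow> nat. (\<exists>\<gamma>\<in>C. y \<gamma> \<noteq> 0) \<and>
            vdiff k (\<lambda>i. \<Sum>\<gamma>\<in>C. y \<gamma> * occ_walk ws \<gamma> i) = 0))"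
    then obtain \<omega> \<pi> x y where w: "is_walk N \<omega>" and pt: "\<pi> \<in> tr \<omega>" "is_path N \<pi>"
      and x: "\<forall>\<gamma>\<in>tr \<omega> - {\<pi>}. x \<gamma> \<ge> 1"
         "vdiff k (\<lambda>i. occ_word ws (hd \<pi>) i + occ_walk ws \<pi> i
                        + (\<Sum>\<gamma>\<in>tr \<omega> - {\<pi>}. x \<gamma> * occ_walk ws \<gamma> i)) = 0"
      and y: "\<exists>\<gamma>\<in>tr \<omega> - {\<pi>}. y \<gamma> \<noteq> 0"
         "vdiff k (\<lambda>i. \<Sum>\<gamma>\<in>tr \<omega> - {\<pi>}. y \<gamma> * occ_walk ws \<gamma> i) = 0"
      unfolding Let_def k_def by blast
    have \<pi>: "\<pi> = fst (dec \<omega>)" using dec_facts(6)[OF w pt] .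
    define C where "C = set (snd (dec \<omega>))"
    have CC: "tr \<omega> - {\<pi>} = C" using dec_facts(5)[OF w] \<pi> unfolding C_def by simp
    have I: "dec_inv N \<omega> (dec \<omega>)" by (rule dec_invariant[OF w])
    have conn: "conn \<pi> C" and cyc: "\<forall>\<gamma>\<in>C. is_cycle N \<gamma>" and wp: "is_walk N \<pi>"
      using I unfolding \<pi> C_def by (auto simp: dec_inv_def Let_def)
    have finC: "finite C" unfolding C_def by simp
    define A where "A = (\<lambda>i. occ_word ws (hd \<pi>) i + occ_walk ws \<pi> i
                        + (\<Sum>\<gamma>\<in>C. x \<gamma> * occ_walk ws \<gamma> i))"
    define B where "B = (\<lambda>i. \<Sum>\<gamma>\<in>C. y \<gamma> * occ_walk ws \<gamma> i)"
    have Ac: "\<forall>i<k. \<forall>j<k. A i = A j" using x(2) unfolding CC A_def vdiff_zero_iff .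
    have Bc: "\<forall>i<k. \<forall>j<k. B i = B j" using y(2) unfolding CC B_def vdiff_zero_iff .
    define b where "b = (\<Sum>\<gamma>\<in>C. y \<gamma> * wt (\<lambda>_. 1) \<gamma>)"
    define L0 where "L0 = N + wt (\<lambda>_. 1) \<pi> + (\<Sum>\<gamma>\<in>C. x \<gamma> * wt (\<lambda>_. 1) \<gamma>)"
    have bpos: "b > 0"
    proof -
      obtain \<gamma>0 where g0: "\<gamma>0 \<in> C" "y \<gamma>0 \<noteq> 0" using y(1) CC by blast
      have "length \<gamma>0 \<ge> 2" using cyc g0 by (auto simp: is_cycle_def)
      then have "wt (\<lambda>_. 1) \<gamma>0 \<ge> 1" using wt_one[of \<gamma>0] by simp
      then have "y \<gamma>0 * wt (\<lambda>_. 1) \<gamma>0 > 0" using g0 by simp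
      moreover have "y \<gamma>0 * wt (\<lambda>_. 1) \<gamma>0 \<le> b" unfolding b_def
        by (rule member_le_sum[OF g0(1) _ finC]) simp
      ultimately show ?thesis by linarith
    qed
    have ex: "\<exists>W. word W \<in> WMIX ws \<and> length (word W) = L0 + t * b" for t
    proof -
      define xt where "xt = (\<lambda>\<gamma>. x \<gamma> + t * y \<gamma>)"
      have "\<forall>\<gamma>\<in>C. xt \<gamma> \<ge> 1"
      proof
        fix \<gamma> assume "\<gamma> \<in> C"
        then have "x \<gamma> \<ge> 1" using x(1) unfolding CC by simp
        then show "xt \<gamma> \<ge> 1" unfolding xt_def by simp
      qed
      from realize[OF finC conn cyc wp this] obtain W where W: "is_walk N W" "hd W = hd \<pi>"
        "\<forall>f. wt f W = wt f \<pi> + (\<Sum>\<gamma>\<in>C. xt \<gamma> * wt f \<gamma>)" by blast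
      have oc: "nocc (ws!i) (word W) = A i + t * B i" if "i < k" for i
      proof -
        have "nocc (ws!i) (word W) = occ_word ws (hd \<pi>) i + occ_walk ws W i"
          using nm[OF W(1) that] W(2) by simp
        also have "occ_walk ws W i = occ_walk ws \<pi> i + (\<Sum>\<gamma>\<in>C. xt \<gamma> * occ_walk ws \<gamma> i)"
          using W(3) unfolding occ_walk_wt by simp
        finally show ?thesis unfolding A_def B_def xt_def sum_split_lin by simp
      qed
      have "word W \<in> WMIX ws" unfolding WM
      proof (intro allI impI)
        fix i j assume ij: "i < k" "j < k"
        show "nocc (ws!i) (word W) = nocc (ws!j) (word W)"
          using oc[OF ij(1)] oc[OF ij(2)] Ac[rule_format, OF ij] Bc[rule_format, OF ij] by simp
      qed
      moreover have "length (word W) = L0 + t * b"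
      proof -
        have "W \<noteq> []" using W(1) by (simp add: is_walk_def)
        have "length (word W) = N + wt (\<lambda>_. 1) W" using length_word[OF W(1)] using wt_one[of W] by simp
        also have "\<dots> = L0 + t * b" using W(3) unfolding L0_def b_def xt_def sum_split_lin by simp
        finally show ?thesis .
      qed
      ultimately show ?thesis by blast
    qed
    then obtain Wf where Wf: "\<And>t. word (Wf t) \<in> WMIX ws \<and> length (word (Wf t)) = L0 + t * b" by metis
    have inj: "inj (\<lambda>t. word (Wf t))"
    proof (rule injI)
      fix s t assume "word (Wf s) = word (Wf t)"
      then have "L0 + s * b = L0 + t * b" using Wf by metis
      then show "s = t" using bpos by simp
    qed
    have sub: "range (\<lambda>t. word (Wf t)) \<subseteq> WMIX ws" using Wf by blast
    show "infinite (WMIX ws)"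
    proof
      assume "finite (WMIX ws)"
      then have "finite (range (\<lambda>t. word (Wf t)))" using sub finite_subset by blast
      then have "finite (UNIV :: nat set)" using finite_imageD inj by blast
      then show False by simp
    qed
  qed
qed

end
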